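(* Let $\mathbf{k}=\mathbb{R}$ or $\mathbb{C}$, let $(C^\bullet,\partial)$ be a complex of finite-dimensional $\mathbf{k}$-vector spaces of odd length $d=2r-1$, and let $\Gamma_t$, $t\in\mathbb{R}$, be a smooth family of chirality operators on $C^\bullet$. Then \[ \frac{d}{dt}\rho_{\Gamma_t}=\frac12\operatorname{Tr}_s(\dot\Gamma_t\circ\Gamma_t)\cdot\rho_{\Gamma_t}, \] where $\rho_{\Gamma_t}$ is regarded as a smooth curve in the fixed line $\operatorname{Det}(H^\bullet(\partial))$.
   Context: $\dot\Gamma_t$ is the $t$-derivative of $\Gamma_t$; $\dot\Gamma_t\circ\Gamma_t$ maps each $C^k$ to itself, and $\operatorname{Tr}_s(\dot\Gamma_t\circ\Gamma_t):=\sum_{j=0}^d(-1)^j\operatorname{Tr}(\dot\Gamma_t\circ\Gamma_t|_{C^j})$. Determinant lines: $\operatorname{Det}(V)=\Lambda^{\dim V}V$, $\operatorname{Det}(0)=\mathbf{k}$, $L^{-1}=\operatorname{Hom}(L,\mathbf{k})$, $l^{-1}(l)=1$, $\operatorname{Det}(V^\bullet)=\bigotimes_j\operatorname{Det}(V^j)^{(-1)^j}$; $\mu_{V_1,\dots,V_r}$ is the fusion isomorphism concatenating wedges. The isomorphism $\phi_{C^\bullet}:\operatorname{Det}(C^\bullet)\to\operatorname{Det}(H^\bullet(\partial))$: choose $C^j=B^j\oplus H^j\oplus A^j$ with $B^j\oplus H^j=\operatorname{Ker}\partial\cap C^j$, $B^j=\partial(A^{j-1})=\partial(C^{j-1})$,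 $A^{-1}=A^d=0$; for nonzero $c_j\in\operatorname{Det}(C^j)$, $a_j\in\operatorname{Det}(A^j)$ ($a_{-1}=1$), $h_j\in\operatorname{Det}(H^j)\cong\operatorname{Det}(H^j(\partial))$ is unique with $c_j=\mu_{B^j,H^j,A^j}(\partial(a_{j-1})\otimes h_j\otimes a_j)$; $\phi_{C^\bullet}(c_0\otimes c_1^{-1}\otimes\cdots\otimes c_d^{(-1)^d})=(-1)^{\mathcal N}h_0\otimes\cdots\otimes h_d^{(-1)^d}$, $\mathcal N=\frac12\sum_j\dim A^j(\dim A^j+(-1)^{j+1})$. A chirality operator is an involution $\Gamma$ with $\Gamma(C^j)=C^{d-j}$; $c_\Gamma=(-1)^{\mathcal R(C^\bullet)}c_0\otimes c_1^{-1}\otimes\cdots\otimes c_{r-1}^{(-1)^{r-1}}\otimes(\Gamma c_{r-1})^{(-1)^r}\otimes\cdots\otimes(\Gamma c_0)^{-1}$ for nonzero $c_j\in\operatorname{Det}(C^j)$, $j<r$ (independent of the $c_j$), $\mathcal R(C^\bullet)=\frac12\sum_{j=0}^{r-1}\dim C^j(\dim C^j+(-1)^{r+j})$; the refined torsion is $\rho_\Gamma=\phi_{C^\bullet}(c_\Gamma)$. *)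

theory Defs
  imports Complex_Main "Jordan_Normal_Form.Determinant"
begin

text \<open>The complex C^0 -> C^1 -> ... -> C^d is modelled in coordinates:
  C^j = k^(n j) (column vectors of dimension n j), and the differential
  C^j -> C^(j+1) is the matrix D j (for j < d; the differential on C^d is zero).\<close>

definition is_complex :: "nat \<Rightarrow> (nat \<Rightarrow> nat) \<Rightarrow> (nat \<Rightarrow> 'a::field mat) \<Rightarrow> bool" where
  "is_complex d n D \<longleftrightarrow>
     (\<forall>j<d. D j \<in> carrier_mat (n (Suc j)) (n j)) \<and>
     (\<forall>j. Suc j < d \<longrightarrow> D (Suc j) * D j = 0\<^sub>m (n (Suc (Suc j))) (n j))"

definition lspan :: "nat \<Rightarrow> 'a::field vec list \<Rightarrow> 'a vec set" where
  "lspan m vs = {mat_of_cols m vs *\<^sub>v c | c. c \<in> carrier_vec (length vs)}"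

definition ker_sp :: "nat \<Rightarrow> (nat \<Rightarrow> nat) \<Rightarrow> (nat \<Rightarrow> 'a::field mat) \<Rightarrow> nat \<Rightarrow> 'a vec set" where
  "ker_sp d n D j = {v \<in> carrier_vec (n j). j < d \<longrightarrow> D j *\<^sub>v v = 0\<^sub>v (n (Suc j))}"

definition im_sp :: "nat \<Rightarrow> (nat \<Rightarrow> nat) \<Rightarrow> (nat \<Rightarrow> 'a::field mat) \<Rightarrow> nat \<Rightarrow> 'a vec set" where
  "im_sp d n D j = (if j = 0 then {0\<^sub>v (n 0)} else (\<lambda>u. D (j - 1) *\<^sub>v u) ` carrier_vec (n (j - 1)))"

text \<open>Coefficient of v_1 \<and> ... \<and> v_m in Det(k^m) with respect to e_1 \<and> ... \<and> e_m.\<close>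
definition wedge_coeff :: "nat \<Rightarrow> 'a::field vec list \<Rightarrow> 'a" where
  "wedge_coeff m vs = det (mat_of_cols m vs)"

text \<open>The list of vectors spanning B^j = \<partial>(A^(j-1)): images of the chosen basis of A^(j-1)
  (A^(-1) = 0).\<close>
definition Blist :: "(nat \<Rightarrow> 'a::field mat) \<Rightarrow> (nat \<Rightarrow> 'a vec list) \<Rightarrow> nat \<Rightarrow> 'a vec list" where
  "Blist D a j = (if j = 0 then [] else map (\<lambda>v. D (j - 1) *\<^sub>v v) (a (j - 1)))"

text \<open>Adapted data for the isomorphism phi: z j is a basis of a complement H^j of B^j in
  Ker \<partial> (its classes form the basis of H^j(\<partial>) in which Det(H^\<bullet>(\<partial>)) is expressed), and
  a j is a basis of a complement A^j with C^j = B^j \<oplus> H^j \<oplus> A^j, B^j = \<partial>(A^(j-1)) = \<partial>(C^(j-1)),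
  B^j \<oplus> H^j = Ker \<partial> \<inter> C^j, A^d = 0.\<close>
definition adapted :: "nat \<Rightarrow> (nat \<Rightarrow> nat) \<Rightarrow> (nat \<Rightarrow> 'a::field mat) \<Rightarrow> (nat \<Rightarrow> 'a vec list)
    \<Rightarrow> (nat \<Rightarrow> 'a vec list) \<Rightarrow> bool" where
  "adapted d n D z a \<longleftrightarrow>
     a d = [] \<and>
     (\<forall>j\<le>d. set (z j) \<subseteq> carrier_vec (n j) \<and> set (a j) \<subseteq> carrier_vec (n j) \<and>
        length (Blist D a j @ z j @ a j) = n j \<and>
        det (mat_of_cols (n j) (Blist D a j @ z j @ a j)) \<noteq> 0 \<and>
        lspan (n j) (Blist D a j @ z j) = ker_sp d n D j \<and>
        lspan (n j) (Blist D a j) = im_sp d n D j)"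

text \<open>A chirality operator, given by its blocks \<Gamma>|C^j : C^j -> C^(d-j).\<close>
definition is_chirality :: "nat \<Rightarrow> (nat \<Rightarrow> nat) \<Rightarrow> (nat \<Rightarrow> 'a::field mat) \<Rightarrow> bool" where
  "is_chirality d n G \<longleftrightarrow>
     (\<forall>j\<le>d. G j \<in> carrier_mat (n (d - j)) (n j) \<and> G (d - j) * G j = 1\<^sub>m (n j))"

definition smooth_curve :: "(real \<Rightarrow> 'a::real_normed_vector) \<Rightarrow> bool" where
  "smooth_curve f \<longleftrightarrow>
     (\<exists>Df. Df 0 = f \<and> (\<forall>m t. (Df m has_vector_derivative Df (Suc m) t) (at t)))"

definition vderiv :: "(real \<Rightarrow> 'a::real_normed_vector) \<Rightarrow> real \<Rightarrow> 'a" where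
  "vderiv f t = (THE f'. (f has_vector_derivative f') (at t))"

definition mat_deriv :: "(real \<Rightarrow> 'a::real_normed_vector mat) \<Rightarrow> real \<Rightarrow> 'a mat" where
  "mat_deriv M t = mat (dim_row (M t)) (dim_col (M t)) (\<lambda>(i, k). vderiv (\<lambda>s. M s $$ (i, k)) t)"

definition smooth_chirality_family :: "nat \<Rightarrow> (nat \<Rightarrow> nat) \<Rightarrow> (real \<Rightarrow> nat \<Rightarrow> 'a::{real_normed_field} mat) \<Rightarrow> bool" where
  "smooth_chirality_family d n G \<longleftrightarrow>
     (\<forall>t. is_chirality d n (G t)) \<and>
     (\<forall>j\<le>d. \<forall>i<n (d - j). \<forall>k<n j. smooth_curve (\<lambda>t. G t j $$ (i, k)))"

definition mat_trace :: "'a::comm_ring_1 mat \<Rightarrow> 'a" where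
  "mat_trace M = (\<Sum>i<dim_row M. M $$ (i, i))"

text \<open>Supertrace of \<Gamma>' \<circ> \<Gamma>: on C^j it is (\<Gamma>'|C^(d-j)) (\<Gamma>|C^j).\<close>
definition supertrace_dot :: "nat \<Rightarrow> (nat \<Rightarrow> 'a::field mat) \<Rightarrow> (nat \<Rightarrow> 'a mat) \<Rightarrow> 'a" where
  "supertrace_dot d G Gd = (\<Sum>j\<le>d. (-1) ^ j * mat_trace (Gd (d - j) * G j))"

text \<open>Coefficient of c_j in c_\<Gamma> (w.r.t. e_1 \<and> ... \<and> e_(n j)): for j < r, c_j = e_1 \<and> ... ;
  for j \<ge> r the factor is \<Gamma> c_(d-j).\<close>
definition cgamma_coeff :: "nat \<Rightarrow> (nat \<Rightarrow> nat) \<Rightarrow> (nat \<Rightarrow> 'a::field mat) \<Rightarrow> nat \<Rightarrow> 'a" where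
  "cgamma_coeff r n G j =
     (if j < r then wedge_coeff (n j) (unit_vecs (n j))
      else wedge_coeff (n j) (map (\<lambda>v. G (2 * r - 1 - j) *\<^sub>v v) (unit_vecs (n (2 * r - 1 - j)))))"

definition R_exp :: "nat \<Rightarrow> (nat \<Rightarrow> nat) \<Rightarrow> int" where
  "R_exp r n = (\<Sum>j<r. int (n j) * (int (n j) + (-1) ^ (r + j))) div 2"

definition N_exp :: "nat \<Rightarrow> (nat \<Rightarrow> 'a vec list) \<Rightarrow> int" where
  "N_exp d a = (\<Sum>j\<le>d. int (length (a j)) * (int (length (a j)) + (-1) ^ (j + 1))) div 2"

text \<open>h_j = hcoeff j \<cdot> (z_1 \<and> ... \<and> z_h), determined by c_j = \<mu>(\<partial>(a_(j-1)) \<otimes> h_j \<otimes> a_j).\<close>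
definition hcoeff :: "nat \<Rightarrow> (nat \<Rightarrow> nat) \<Rightarrow> (nat \<Rightarrow> 'a::field mat) \<Rightarrow> (nat \<Rightarrow> 'a vec list)
    \<Rightarrow> (nat \<Rightarrow> 'a vec list) \<Rightarrow> (nat \<Rightarrow> 'a mat) \<Rightarrow> nat \<Rightarrow> 'a" where
  "hcoeff r n D z a G j =
     cgamma_coeff r n G j / wedge_coeff (n j) (Blist D a j @ z j @ a j)"

text \<open>Refined torsion \<rho>_\<Gamma> = \<phi>(c_\<Gamma>), expressed as its coordinate in the line Det(H^\<bullet>(\<partial>))
  with respect to the basis  [z_0] \<otimes> [z_1]^(-1) \<otimes> ... \<otimes> [z_d]^(-1), where [z_j] is the wedge
  of the classes of z j; note (x l)^(-1) = x^(-1) l^(-1).\<close>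
definition rho_coord :: "nat \<Rightarrow> (nat \<Rightarrow> nat) \<Rightarrow> (nat \<Rightarrow> 'a::field mat) \<Rightarrow> (nat \<Rightarrow> 'a vec list)
    \<Rightarrow> (nat \<Rightarrow> 'a vec list) \<Rightarrow> (nat \<Rightarrow> 'a mat) \<Rightarrow> 'a" where
  "rho_coord r n D z a G =
     (-1) powi (R_exp r n + N_exp (2 * r - 1) a) *
     (\<Prod>j\<le>2 * r - 1. (if even j then hcoeff r n D z a G j else inverse (hcoeff r n D z a G j)))"

end

theory Submission
  imports Defs
begin

lemma mat_of_cols_mult_unit:
  fixes M :: "'a::field mat"
  assumes "M \<in> carrier_mat nr nc"
  shows "mat_of_cols nr (map (\<lambda>v. M *\<^sub>v v) (unit_vecs nc)) = M"
proof (intro eq_matI)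
  fix i j assume ij: "i < dim_row M" "j < dim_col M"
  have "Matrix.row M i \<bullet> unit_vec nc j = Matrix.row M i $ j"
    using ij assms by (intro scalar_prod_right_unit) auto
  then show "mat_of_cols nr (map (\<lambda>v. M *\<^sub>v v) (unit_vecs nc)) $$ (i, j) = M $$ (i, j)"
    using ij assms by (auto simp: mat_of_cols_def unit_vecs_def)
qed (use assms in \<open>auto simp: unit_vecs_def\<close>)

lemma mat_of_cols_unit: "mat_of_cols m (unit_vecs m) = 1\<^sub>m m"
  by (intro eq_matI) (auto simp: mat_of_cols_def unit_vecs_def)

lemma trace_mult_expand:
  assumes "X \<in> carrier_mat p q" "Y \<in> carrier_mat q p"
  shows "mat_trace (X * Y) = (\<Sum>i<p. \<Sum>k<q. X $$ (i,k) * Y $$ (k,i))"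
  using assms by (auto simp: mat_trace_def scalar_prod_def lessThan_atLeast0 intro!: sum.cong)

lemma vector_derivative_unique_at:
  fixes f :: "real \<Rightarrow> 'b::real_normed_vector"
  assumes "(f has_vector_derivative f') (at x)" "(f has_vector_derivative f'') (at x)"
  shows "f' = f''"
proof -
  have "(\<lambda>h. h *\<^sub>R f') = (\<lambda>h. h *\<^sub>R f'')"
    using assms unfolding has_vector_derivative_def by (rule has_derivative_unique)
  then show ?thesis by (metis scaleR_one)
qed

lemma has_vector_derivative_inverse_at:
  fixes f :: "real \<Rightarrow> 'a::real_normed_field"
  assumes "(f has_vector_derivative f') (at x)" "f x \<noteq> 0"
  shows "((\<lambda>s. inverse (f s)) has_vector_derivative (- (inverse (f x) * f' * inverse (f x)))) (at x)"
proof -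
  have "((\<lambda>s. inverse (f s)) has_derivative (\<lambda>h. - (inverse (f x) * (h *\<^sub>R f') * inverse (f x)))) (at x)"
    using assms unfolding has_vector_derivative_def by (intro has_derivative_inverse) auto
  then show ?thesis unfolding has_vector_derivative_def
    by (simp add: scaleR_conv_of_real mult_ac)
qed

lemma vderiv_eq:
  assumes "(f has_vector_derivative f') (at t)"
  shows "vderiv f t = f'"
  unfolding vderiv_def using assms vector_derivative_unique_at by blast

lemma smooth_curve_deriv:
  assumes "smooth_curve f"
  shows "(f has_vector_derivative vderiv f t) (at t)"
proof -
  from assms obtain Df where "Df 0 = f" "\<And>m t. (Df m has_vector_derivative Df (Suc m) t) (at t)"
    unfolding smooth_curve_def by blast
  then have "(f has_vector_derivative Df 1 t) (at t)" by (metis One_nat_def)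
  then show ?thesis using vderiv_eq by metis
qed

lemma vprod_deriv:
  fixes f :: "'i \<Rightarrow> real \<Rightarrow> 'a::real_normed_field"
  assumes "\<And>x. x \<in> A \<Longrightarrow> (f x has_vector_derivative f' x) (at z)"
  shows "((\<lambda>u. \<Prod>x\<in>A. f x u) has_vector_derivative (\<Sum>x\<in>A. f' x * (\<Prod>y\<in>A-{x}. f y z))) (at z)"
  using assms
proof (induction A rule: infinite_finite_induct)
  case (insert x A)
  have eq: "insert x A - {y} = insert x (A - {y})" if "y \<in> A" for y
    using insert.hyps that by auto
  have "((\<lambda>u. f x u * (\<Prod>x\<in>A. f x u)) has_vector_derivative
     f x z * (\<Sum>x\<in>A. f' x * (\<Prod>y\<in>A-{x}. f y z)) + f' x * (\<Prod>x\<in>A. f x z)) (at z)"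
    by (rule has_vector_derivative_mult) (use insert in auto)
  moreover have "f x z * (\<Sum>x\<in>A. f' x * (\<Prod>y\<in>A-{x}. f y z)) + f' x * (\<Prod>x\<in>A. f x z)
     = (\<Sum>y\<in>insert x A. f' y * (\<Prod>y\<in>insert x A - {y}. f y z))"
    using insert.hyps
    by (auto simp: sum_distrib_left sum_distrib_right eq mult_ac add.commute intro!: sum.cong)
  ultimately show ?case
    using insert.hyps by simp
qed auto

lemma cofactor_row_indep:
  fixes M :: "'a::comm_ring_1 mat"
  assumes M: "M \<in> carrier_mat m m" and i: "i < m"
  shows "cofactor (mat m m (\<lambda>(l,k). if l = i then v k else M $$ (l,k))) i k = cofactor M i k"
proof -
  have "mat_delete (mat m m (\<lambda>(l,k). if l = i then v k else M $$ (l,k))) i k = mat_delete M i k"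
    using M i by (intro eq_matI) (auto simp: mat_delete_def)
  then show ?thesis unfolding cofactor_def by simp
qed

lemma det_row_replace:
  fixes M :: "'a::comm_ring_1 mat"
  assumes M: "M \<in> carrier_mat m m" and i: "i < m"
  shows "det (mat m m (\<lambda>(l,k). if l = i then v k else M $$ (l,k))) = (\<Sum>k<m. v k * cofactor M i k)"
proof -
  have "det (mat m m (\<lambda>(l,k). if l = i then v k else M $$ (l,k))) =
    (\<Sum>k<m. (mat m m (\<lambda>(l,k). if l = i then v k else M $$ (l,k))) $$ (i,k) *
       cofactor (mat m m (\<lambda>(l,k). if l = i then v k else M $$ (l,k))) i k)"
    by (rule laplace_expansion_row) (use i in auto)
  also have "\<dots> = (\<Sum>k<m. v k * cofactor M i k)"
    using i by (intro sum.cong refl) (simp add: cofactor_row_indep[OF M i])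
  finally show ?thesis .
qed

lemma cofactor_inverse:
  fixes M :: "'a::comm_ring_1 mat"
  assumes M: "M \<in> carrier_mat m m" and N: "N \<in> carrier_mat m m" "N * M = 1\<^sub>m m"
    and ik: "i < m" "k < m"
  shows "cofactor M i k = det M * N $$ (k, i)"
proof -
  have A: "adj_mat M \<in> carrier_mat m m" "M * adj_mat M = det M \<cdot>\<^sub>m 1\<^sub>m m"
    using adj_mat[OF M] by auto
  have "adj_mat M = (N * M) * adj_mat M" using N A by simp
  also have "\<dots> = N * (M * adj_mat M)" by (rule assoc_mult_mat[OF N(1) M A(1)])
  also have "\<dots> = det M \<cdot>\<^sub>m N" using A N by (simp add: mult_smult_distrib[OF N(1) one_carrier_mat])
  finally have "adj_mat M $$ (k, i) = det M * N $$ (k, i)" using N ik by simp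
  then show ?thesis using M ik by (simp add: adj_mat_def)
qed

lemma det_deriv:
  fixes M :: "real \<Rightarrow> 'a::real_normed_field mat"
  assumes M: "\<And>s. M s \<in> carrier_mat m m" and Md: "Md \<in> carrier_mat m m"
    and D: "\<And>i k. i < m \<Longrightarrow> k < m \<Longrightarrow> ((\<lambda>s. M s $$ (i,k)) has_vector_derivative Md $$ (i,k)) (at t)"
    and N: "N \<in> carrier_mat m m" "N * M t = 1\<^sub>m m"
  shows "((\<lambda>s. det (M s)) has_vector_derivative det (M t) * mat_trace (Md * N)) (at t)"
proof -
  define P where "P = {p. p permutes {0..<m}}"
  have finP: "finite P" unfolding P_def by (simp add: finite_permutations)
  have pin: "p i < m" if "p \<in> P" "i < m" for p i
    using that unfolding P_def by (simp add: permutes_in_image)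
  have eq: "(\<lambda>s. det (M s)) = (\<lambda>s. \<Sum>p\<in>P. signof p * (\<Prod>i\<in>{0..<m}. M s $$ (i, p i)))"
    unfolding P_def by (rule ext, rule det_def'[OF M])
  define A where "A i = mat m m (\<lambda>(l,k). if l = i then Md $$ (i,k) else M t $$ (l,k))" for i
  have step1: "((\<lambda>s. \<Sum>p\<in>P. signof p * (\<Prod>i\<in>{0..<m}. M s $$ (i, p i))) has_vector_derivative
     (\<Sum>p\<in>P. signof p * (\<Sum>i\<in>{0..<m}. Md $$ (i, p i) * (\<Prod>l\<in>{0..<m}-{i}. M t $$ (l, p l))))) (at t)"
    by (intro has_vector_derivative_sum has_vector_derivative_mult_right vprod_deriv D) (auto intro: pin)
  have prodA: "(\<Prod>l\<in>{0..<m}. A i $$ (l, p l)) = Md $$ (i, p i) * (\<Prod>l\<in>{0..<m}-{i}. M t $$ (l, p l))"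
    if "i < m" "p \<in> P" for i p
  proof -
    have "(\<Prod>l\<in>{0..<m}. A i $$ (l, p l)) = A i $$ (i, p i) * (\<Prod>l\<in>{0..<m}-{i}. A i $$ (l, p l))"
      using that by (intro prod.remove) auto
    also have "\<dots> = Md $$ (i, p i) * (\<Prod>l\<in>{0..<m}-{i}. M t $$ (l, p l))"
      using that pin unfolding A_def by (auto intro!: prod.cong)
    finally show ?thesis .
  qed
  have "(\<Sum>p\<in>P. signof p * (\<Sum>i\<in>{0..<m}. Md $$ (i, p i) * (\<Prod>l\<in>{0..<m}-{i}. M t $$ (l, p l))))
      = (\<Sum>i\<in>{0..<m}. \<Sum>p\<in>P. signof p * (\<Prod>l\<in>{0..<m}. A i $$ (l, p l)))"
    by (subst sum.swap) (auto simp: sum_distrib_left prodA intro!: sum.cong)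
  also have "\<dots> = (\<Sum>i\<in>{0..<m}. det (A i))"
    by (intro sum.cong refl) (simp add: det_def'[of _ m] A_def P_def)
  also have "\<dots> = (\<Sum>i\<in>{0..<m}. \<Sum>k<m. Md $$ (i,k) * cofactor (M t) i k)"
    unfolding A_def by (intro sum.cong refl) (auto simp: det_row_replace[OF M])
  also have "\<dots> = (\<Sum>i\<in>{0..<m}. \<Sum>k<m. Md $$ (i,k) * (det (M t) * N $$ (k, i)))"
    by (intro sum.cong refl) (auto simp: cofactor_inverse[OF M N])
  also have "\<dots> = det (M t) * mat_trace (Md * N)"
    by (simp add: trace_mult_expand[OF Md N(1)] sum_distrib_left lessThan_atLeast0 mult_ac)
  finally show ?thesis using step1 eq by simp
qed

lemma vprod_deriv_log:
  fixes f :: "'i \<Rightarrow> real \<Rightarrow> 'a::real_normed_field"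
  assumes fin: "finite A" and D: "\<And>x. x \<in> A \<Longrightarrow> (f x has_vector_derivative c x * f x z) (at z)"
  shows "((\<lambda>u. \<Prod>x\<in>A. f x u) has_vector_derivative (\<Sum>x\<in>A. c x) * (\<Prod>x\<in>A. f x z)) (at z)"
proof -
  have "((\<lambda>u. \<Prod>x\<in>A. f x u) has_vector_derivative (\<Sum>x\<in>A. c x * f x z * (\<Prod>y\<in>A-{x}. f y z))) (at z)"
    by (rule vprod_deriv) (use D in auto)
  moreover have "(\<Sum>x\<in>A. c x * f x z * (\<Prod>y\<in>A-{x}. f y z)) = (\<Sum>x\<in>A. c x) * (\<Prod>x\<in>A. f x z)"
    unfolding sum_distrib_right
  proof (intro sum.cong refl)
    fix x assume x: "x \<in> A"
    show "c x * f x z * (\<Prod>y\<in>A-{x}. f y z) = c x * (\<Prod>x\<in>A. f x z)"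
      by (simp add: prod.remove[OF fin x] mult.assoc)
  qed
  ultimately show ?thesis by simp
qed

lemma neg_one_pow_odd_sum:
  assumes "odd (a + b)"
  shows "(-1::'a::ring_1) ^ a = - ((-1) ^ b)"
  using assms by (cases "even b") auto

theorem proposition4p5:
  fixes r d :: nat and n :: "nat \<Rightarrow> nat" and D :: "nat \<Rightarrow> 'a::real_normed_field mat"
    and G :: "real \<Rightarrow> nat \<Rightarrow> 'a mat"
  assumes "r \<ge> 1" and "d = 2 * r - 1"
    and "is_complex d n D"
    and "smooth_chirality_family d n G"
    and "adapted d n D z a"
  shows "((\<lambda>s. rho_coord r n D z a (G s)) has_vector_derivative
           (1 / 2 * supertrace_dot d (G t) (\<lambda>j. mat_deriv (\<lambda>s. G s j) t)) * rho_coord r n D z a (G t))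
         (at t)"
proof -
  note r = assms(1) and dd = assms(2)
  have dd': "2 * r - 1 = d" using dd by simp
  have chir: "\<And>s. is_chirality d n (G s)"
    and sm: "\<And>j i k. j \<le> d \<Longrightarrow> i < n (d - j) \<Longrightarrow> k < n j \<Longrightarrow> smooth_curve (\<lambda>t. G t j $$ (i, k))"
    using assms(4) unfolding smooth_chirality_family_def by auto
  have Gc: "\<And>s j. j \<le> d \<Longrightarrow> G s j \<in> carrier_mat (n (d - j)) (n j)"
    and Ginv: "\<And>s j. j \<le> d \<Longrightarrow> G s (d - j) * G s j = 1\<^sub>m (n j)"
    using chir unfolding is_chirality_def by auto
  have Ginv': "G s j * G s (d - j) = 1\<^sub>m (n (d - j))" if "j \<le> d" for s j
    using Ginv[of "d - j" s] that by simp
  define Gd where "Gd j = mat_deriv (\<lambda>s. G s j) t" for j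
  have Gdc: "Gd j \<in> carrier_mat (n (d - j)) (n j)" if "j \<le> d" for j
    using Gc[OF that, of t] unfolding Gd_def mat_deriv_def by auto
  have Gd_der: "((\<lambda>s. G s j $$ (i, k)) has_vector_derivative Gd j $$ (i, k)) (at t)"
    if "j \<le> d" "i < n (d - j)" "k < n j" for j i k
  proof -
    have "Gd j $$ (i, k) = vderiv (\<lambda>s. G s j $$ (i, k)) t"
      using Gc[OF that(1), of t] that unfolding Gd_def mat_deriv_def by auto
    then show ?thesis using smooth_curve_deriv[OF sm[OF that]] by simp
  qed
  define T where "T j = mat_trace (Gd (d - j) * G t j)" for j
  have Tanti: "T (d - j) = - T j" if j: "j \<le> d" for j
  proof -
    have jj: "d - (d - j) = j" using j by simp
    have Gc2: "G s (d - j) \<in> carrier_mat (n j) (n (d - j))" for s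
      using Gc[of "d - j" s] jj by simp
    have Gdc2: "Gd (d - j) \<in> carrier_mat (n j) (n (d - j))"
      using Gdc[of "d - j"] jj by simp
    define f where "f s = (\<Sum>i<n (d - j). \<Sum>k<n j. G s j $$ (i, k) * G s (d - j) $$ (k, i))" for s
    have fc: "f s = mat_trace (1\<^sub>m (n (d - j)) :: 'a mat)" for s
      unfolding f_def using Ginv'[OF j, of s] trace_mult_expand[OF Gc[OF j, of s] Gc2[of s]] by simp
    have d1: "(f has_vector_derivative
        (\<Sum>i<n (d - j). \<Sum>k<n j. G t j $$ (i, k) * Gd (d - j) $$ (k, i) + Gd j $$ (i, k) * G t (d - j) $$ (k, i))) (at t)"
      unfolding f_def
    proof (intro has_vector_derivative_sum has_vector_derivative_mult)
      fix i k assume ik: "i \<in> {..<n (d - j)}" "k \<in> {..<n j}"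
      show "((\<lambda>s. G s j $$ (i, k)) has_vector_derivative Gd j $$ (i, k)) (at t)"
        using ik j by (intro Gd_der) auto
      show "((\<lambda>s. G s (d - j) $$ (k, i)) has_vector_derivative Gd (d - j) $$ (k, i)) (at t)"
        using ik j Gd_der[of "d - j" k i] jj by auto
    qed
    have d0: "(f has_vector_derivative 0) (at t)"
      unfolding fc by simp
    have "0 = (\<Sum>i<n (d - j). \<Sum>k<n j. G t j $$ (i, k) * Gd (d - j) $$ (k, i) + Gd j $$ (i, k) * G t (d - j) $$ (k, i))"
      using vector_derivative_unique_at[OF d0 d1] .
    also have "\<dots> = (\<Sum>i<n (d - j). \<Sum>k<n j. G t j $$ (i, k) * Gd (d - j) $$ (k, i))
        + (\<Sum>i<n (d - j). \<Sum>k<n j. Gd j $$ (i, k) * G t (d - j) $$ (k, i))"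
      by (simp add: sum.distrib)
    also have "(\<Sum>i<n (d - j). \<Sum>k<n j. G t j $$ (i, k) * Gd (d - j) $$ (k, i)) = T j"
      unfolding T_def trace_mult_expand[OF Gdc2 Gc[OF j]]
      by (subst sum.swap) (simp add: mult.commute)
    also have "(\<Sum>i<n (d - j). \<Sum>k<n j. Gd j $$ (i, k) * G t (d - j) $$ (k, i)) = T (d - j)"
      unfolding T_def jj trace_mult_expand[OF Gdc[OF j] Gc2] ..
    finally show ?thesis by (simp add: eq_neg_iff_add_eq_0 add.commute)
  qed
  have ST: "supertrace_dot d (G t) (\<lambda>j. mat_deriv (\<lambda>s. G s j) t) = (\<Sum>j\<le>d. (-1) ^ j * T j)"
    unfolding supertrace_dot_def T_def Gd_def ..
  define w where "w j = wedge_coeff (n j) (Blist D a j @ z j @ a j)" for j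
  have wnz: "w j \<noteq> 0" if "j \<le> d" for j
    using assms(5) that unfolding adapted_def w_def wedge_coeff_def by auto
  have hdef: "hcoeff r n D z a (G s) j = cgamma_coeff r n (G s) j / w j" for s j
    unfolding hcoeff_def w_def ..
  have cg_low: "cgamma_coeff r n (G s) j = 1" if "j < r" for s j
    using that unfolding cgamma_coeff_def wedge_coeff_def by (simp add: mat_of_cols_unit)
  have cg_high: "cgamma_coeff r n (G s) j = det (G s (d - j))" if "r \<le> j" "j \<le> d" for s j
  proof -
    have "G s (d - j) \<in> carrier_mat (n j) (n (d - j))"
      using Gc[of "d - j" s] that by simp
    then show ?thesis
      using that unfolding cgamma_coeff_def wedge_coeff_def dd' by (simp add: mat_of_cols_mult_unit)
  qed
  define sg where "sg = ((-1::'a) powi (R_exp r n + N_exp (2 * r - 1) a))"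
  define \<phi> where "\<phi> j s = (if even j then hcoeff r n D z a (G s) j else inverse (hcoeff r n D z a (G s) j))" for j s
  have rho_eq: "rho_coord r n D z a (G s) = sg * (\<Prod>j\<le>d. \<phi> j s)" for s
    unfolding rho_coord_def sg_def \<phi>_def dd' ..
  show ?thesis
  proof (cases "\<forall>j<r. n j = n (d - j)")
    case False
    then obtain k where k: "k < r" "n k \<noteq> n (d - k)" by auto
    define j where "j = d - k"
    have j: "r \<le> j" "j \<le> d" "d - j = k" "k \<le> d" "d - k = j" using k r dd unfolding j_def by auto
    have phi0: "\<phi> j s = 0" for s
    proof -
      have Gk: "G s k \<in> carrier_mat (n j) (n k)" using Gc[OF j(4), of s] unfolding j(5) .
      have nn: "n j \<noteq> n k" using k(2) j(5) by simp
      have "det (G s k) = 0" using Gk nn by (simp add: det_def)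
      then show ?thesis unfolding \<phi>_def hdef cg_high[OF j(1,2)] j(3) by simp
    qed
    have "rho_coord r n D z a (G s) = 0" for s
    proof -
      have "(\<Prod>j\<le>d. \<phi> j s) = 0"
        by (rule prod_zero) (use j(2) phi0 in auto)
      then show ?thesis unfolding rho_eq by simp
    qed
    then show ?thesis by simp
  next
    case True
    define c where "c j = (if j < r then 0 else (-1) ^ j * T j)" for j
    have der: "(\<phi> j has_vector_derivative c j * \<phi> j t) (at t)" if j: "j \<le> d" for j
    proof (cases "j < r")
      case True
      then have "\<phi> j = (\<lambda>s. \<phi> j t)" unfolding \<phi>_def hdef cg_low[OF True] by auto
      then show ?thesis unfolding c_def using True by (metis has_vector_derivative_const mult_zero_left)
    next
      case False
      define k where "k = d - j"
      have k: "k < r" "k \<le> d" "d - k = j" using False j r dd unfolding k_def by auto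
      have sq: "n k = n j" using True k by auto
      have Mc: "G s k \<in> carrier_mat (n j) (n j)" for s using Gc[OF k(2), of s] k sq by simp
      have Nc: "G t j \<in> carrier_mat (n j) (n j)" using Gc[OF j, of t] k sq by (simp add: k_def)
      have NM: "G t j * G t k = 1\<^sub>m (n j)" using Ginv[OF k(2), of t] k sq by simp
      have Mdc: "Gd k \<in> carrier_mat (n j) (n j)" using Gdc[OF k(2)] k sq by simp
      have detd: "((\<lambda>s. det (G s k)) has_vector_derivative det (G t k) * mat_trace (Gd k * G t j)) (at t)"
      proof (rule det_deriv[where M="\<lambda>s. G s k" and m="n j", OF Mc Mdc _ Nc NM])
        fix i l assume "i < n j" "l < n j"
        then show "((\<lambda>s. G s k $$ (i, l)) has_vector_derivative Gd k $$ (i, l)) (at t)"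
          using Gd_der[OF k(2)] k sq by auto
      qed
      have Tj: "mat_trace (Gd k * G t j) = T j" unfolding T_def k_def ..
      have hk: "hcoeff r n D z a (G s) j = det (G s k) / w j" for s
        unfolding hdef k_def using cg_high[of j s] False j by simp
      have hd: "((\<lambda>s. hcoeff r n D z a (G s) j) has_vector_derivative T j * hcoeff r n D z a (G t) j) (at t)"
        unfolding hk using has_vector_derivative_divide[OF detd, of "w j"] Tj by (simp add: mult_ac)
      have detnz: "det (G t k) \<noteq> 0"
        using det_mult[OF Nc Mc[of t]] NM by auto
      have hnz: "hcoeff r n D z a (G t) j \<noteq> 0" unfolding hk using detnz wnz[OF j] by simp
      show ?thesis
      proof (cases "even j")
        case True
        then show ?thesis using hd False unfolding \<phi>_def c_def by simp
      next
        case odd: False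
        have "((\<lambda>s. inverse (hcoeff r n D z a (G s) j)) has_vector_derivative
           - (inverse (hcoeff r n D z a (G t) j) * (T j * hcoeff r n D z a (G t) j) * inverse (hcoeff r n D z a (G t) j))) (at t)"
          by (rule has_vector_derivative_inverse_at[OF hd hnz])
        moreover have "- (inverse (hcoeff r n D z a (G t) j) * (T j * hcoeff r n D z a (G t) j) * inverse (hcoeff r n D z a (G t) j))
            = - T j * inverse (hcoeff r n D z a (G t) j)"
          using hnz by (simp add: field_simps)
        ultimately show ?thesis using odd False unfolding \<phi>_def c_def by simp
      qed
    qed
    have P: "((\<lambda>s. \<Prod>j\<le>d. \<phi> j s) has_vector_derivative (\<Sum>j\<le>d. c j) * (\<Prod>j\<le>d. \<phi> j t)) (at t)"
      by (rule vprod_deriv_log) (use der in auto)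
    have sumc: "(\<Sum>j\<le>d. c j) = 1 / 2 * (\<Sum>j\<le>d. (-1) ^ j * T j)"
    proof -
      have U: "(\<Sum>j\<le>d. c j) = (\<Sum>j\<in>{r..d}. (-1) ^ j * T j)"
      proof -
        have "(\<Sum>j\<le>d. c j) = (\<Sum>j\<in>{r..d}. c j)"
          by (rule sum.mono_neutral_right) (auto simp: c_def)
        also have "\<dots> = (\<Sum>j\<in>{r..d}. (-1) ^ j * T j)" by (intro sum.cong refl) (auto simp: c_def)
        finally show ?thesis .
      qed
      have split: "{..d} = {..<r} \<union> {r..d}" using r dd by auto
      have L: "(\<Sum>j<r. (-1) ^ j * T j) = (\<Sum>j\<in>{r..d}. (-1) ^ j * T j)"
      proof -
        have "(\<Sum>j\<in>{r..d}. (-1) ^ j * T j) = (\<Sum>j\<in>{r..d}. (-1) ^ (d - j) * T (d - j))"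
        proof (intro sum.cong refl)
          fix j assume "j \<in> {r..d}"
          then have jd: "j \<le> d" by auto
          have "odd ((d - j) + j)" using jd dd r by auto
          then have "(-1::'a) ^ (d - j) = - ((-1) ^ j)" by (rule neg_one_pow_odd_sum)
          then show "(-1) ^ j * T j = (-1) ^ (d - j) * T (d - j)" using Tanti[OF jd] by simp
        qed
        also have "\<dots> = (\<Sum>j<r. (-1) ^ j * T j)"
        proof (rule sum.reindex_bij_witness[of _ "\<lambda>k. d - k" "\<lambda>j. d - j"])
        qed (use r dd in auto)
        finally show ?thesis by simp
      qed
      have "(\<Sum>j\<le>d. (-1) ^ j * T j) = (\<Sum>j<r. (-1) ^ j * T j) + (\<Sum>j\<in>{r..d}. (-1) ^ j * T j)"
        unfolding split by (rule sum.union_disjoint) auto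
      then have "(\<Sum>j\<le>d. (-1) ^ j * T j) = 2 * (\<Sum>j\<le>d. c j)" using L U by simp
      then show ?thesis by simp
    qed
    have "((\<lambda>s. sg * (\<Prod>j\<le>d. \<phi> j s)) has_vector_derivative sg * ((\<Sum>j\<le>d. c j) * (\<Prod>j\<le>d. \<phi> j t))) (at t)"
      by (rule has_vector_derivative_mult_right[OF P])
    then show ?thesis unfolding rho_eq ST sumc by (simp add: mult_ac)
  qed
qed

end
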